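(* Let $K$ be a field. For every valuation $\nu$ on $K[x]$ there exists a set $\mathbf{Q}\subseteq K[x]$ of key polynomials for $\nu$ which satisfies (GS1$^*$). Moreover, $\mathbf{Q}$ can be chosen so that distinct elements of $\mathbf{Q}$ have distinct values of $\epsilon$ and $\mathbf{Q}$ is well-ordered by the order $Q<Q'$ iff $\epsilon(Q)<\epsilon(Q')$.
   Context: $\nu:K[x]\to\Gamma\cup\{\infty\}$ is a valuation ($\Gamma$ an ordered abelian group) with $\nu(f)=\infty$ only for $f=0$; $\Gamma'=\Gamma\otimes\mathbb{Q}$. For $k\in\mathbb{N}$, $\partial_kf=\frac{1}{k!}\frac{d^kf}{dx^k}$. For nonconstant $f$, $\epsilon(f)=\max\{(\nu(f)-\nu(\partial_kf))/k\mid 1\le k\le\deg f,\ \partial_kf\ne0\}\in\Gamma'$. A key polynomial is a monic nonconstant $Q\in K[x]$ such that every nonconstant $f\in K[x]$ with $\epsilon(f)\ge\epsilon(Q)$ satisfies $\deg f\ge\deg Q$. For finitely supported $\lambda:\mathbf{Q}\to\mathbb{N}_0$ let $\mathbf{Q}^\lambda=\prod_{\lambda(Q)\neq0}Q^{\lambda(Q)}$. (GS1$^*$): for every $f\in K[x]$ there exist $r\ge0$, $a_1,\dots,a_r\in K$ and finitely supported $\lambda_1,\dots,\lambda_r:\mathbf{Q}\to\mathbb{N}_0$ with $f=\sum_{i=1}^ra_i\mathbf{Q}^{\lambda_i}$, $\nu(a_i\mathbf{Q}^{\lambda_i})\ge\nu(f)$ for all $i$, and $\deg Q\le\deg f$ whenever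 $\lambda_i(Q)\ne0$ for some $i$. *)

theory Defs
  imports "HOL-Computational_Algebra.Polynomial"
begin

text \<open>We record
  only the finite values: \<open>\<nu> f\<close> is meaningful for \<open>f \<noteq> 0\<close>, and \<open>\<nu> 0 = \<infinity>\<close>
  is handled by the convention encoded in \<open>val_ge\<close>.\<close>

definition is_valuation :: "('a::field poly \<Rightarrow> 'g::linordered_ab_group_add) \<Rightarrow> bool" where
  "is_valuation \<nu> \<longleftrightarrow>
     (\<forall>f g. f \<noteq> 0 \<longrightarrow> g \<noteq> 0 \<longrightarrow> \<nu> (f * g) = \<nu> f + \<nu> g) \<and>
     (\<forall>f g. f \<noteq> 0 \<longrightarrow> g \<noteq> 0 \<longrightarrow> f + g \<noteq> 0 \<longrightarrow> min (\<nu> f) (\<nu> g) \<le> \<nu> (f + g))"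

text \<open>\<open>val_ge \<nu> g f\<close> means \<open>\<nu>(g) \<ge> \<nu>(f)\<close> in \<open>\<Gamma> \<union> {\<infinity>}\<close>, with \<open>\<nu>(0) = \<infinity>\<close>.\<close>
definition val_ge :: "('a::field poly \<Rightarrow> 'g::linordered_ab_group_add) \<Rightarrow> 'a poly \<Rightarrow> 'a poly \<Rightarrow> bool" where
  "val_ge \<nu> g f \<longleftrightarrow> g = 0 \<or> (f \<noteq> 0 \<and> \<nu> f \<le> \<nu> g)"

text \<open>Hasse derivative \<open>\<partial>\<^sub>k\<close> (equals \<open>(1/k!) d\<^sup>k/dx\<^sup>k\<close> in characteristic 0):
  \<open>\<partial>\<^sub>k x\<^sup>i = (i choose k) x\<^sup>i\<^sup>-\<^sup>k\<close>.\<close>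
definition hasse :: "nat \<Rightarrow> 'a::field poly \<Rightarrow> 'a poly" where
  "hasse k f = (\<Sum>i\<le>degree f. monom (of_nat (i choose k) * coeff f i) (i - k))"

definition nsm :: "nat \<Rightarrow> 'g::ab_group_add \<Rightarrow> 'g" where
  "nsm n a = (\<Sum>i<n. a)"

text \<open>Elements of \<open>\<Gamma>' = \<Gamma> \<otimes> \<rat>\<close> are represented as formal quotients \<open>a/m\<close>
  (pairs \<open>(a, m)\<close>, \<open>m > 0\<close>); \<open>a/m \<le> b/n\<close> iff \<open>n a \<le> m b\<close> in \<open>\<Gamma>\<close>.\<close>
definition frac_le :: "'g::linordered_ab_group_add \<times> nat \<Rightarrow> 'g \<times> nat \<Rightarrow> bool" where
  "frac_le p q \<longleftrightarrow> nsm (snd q) (fst p) \<le> nsm (snd p) (fst q)"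

text \<open>The candidates \<open>(\<nu>(f) - \<nu>(\<partial>\<^sub>kf))/k\<close>, \<open>1 \<le> k \<le> deg f\<close>, \<open>\<partial>\<^sub>kf \<noteq> 0\<close>; \<open>\<epsilon>(f)\<close> is their maximum.\<close>
definition eps_cands :: "('a::field poly \<Rightarrow> 'g::linordered_ab_group_add) \<Rightarrow> 'a poly \<Rightarrow> ('g \<times> nat) set" where
  "eps_cands \<nu> f = {(\<nu> f - \<nu> (hasse k f), k) | k. 1 \<le> k \<and> k \<le> degree f \<and> hasse k f \<noteq> 0}"

text \<open>\<open>eps_le \<nu> f g\<close> means \<open>\<epsilon>(f) \<le> \<epsilon>(g)\<close>, i.e. max of the candidates of f \<open>\<le>\<close> max of those of g.\<close>
definition eps_le :: "('a::field poly \<Rightarrow> 'g::linordered_ab_group_add) \<Rightarrow> 'a poly \<Rightarrow> 'a poly \<Rightarrow> bool" where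
  "eps_le \<nu> f g \<longleftrightarrow> (\<forall>p\<in>eps_cands \<nu> f. \<exists>q\<in>eps_cands \<nu> g. frac_le p q)"

definition eps_lt :: "('a::field poly \<Rightarrow> 'g::linordered_ab_group_add) \<Rightarrow> 'a poly \<Rightarrow> 'a poly \<Rightarrow> bool" where
  "eps_lt \<nu> f g \<longleftrightarrow> eps_le \<nu> f g \<and> \<not> eps_le \<nu> g f"

definition key_poly :: "('a::field poly \<Rightarrow> 'g::linordered_ab_group_add) \<Rightarrow> 'a poly \<Rightarrow> bool" where
  "key_poly \<nu> Q \<longleftrightarrow> lead_coeff Q = 1 \<and> degree Q \<ge> 1 \<and>
     (\<forall>f. degree f \<ge> 1 \<longrightarrow> eps_le \<nu> Q f \<longrightarrow> degree f \<ge> degree Q)"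

definition Qpow :: "('a::field poly \<Rightarrow> nat) \<Rightarrow> 'a poly" where
  "Qpow lam = (\<Prod>Q\<in>{Q. lam Q \<noteq> 0}. Q ^ lam Q)"

definition fin_exp :: "'a::field poly set \<Rightarrow> ('a poly \<Rightarrow> nat) \<Rightarrow> bool" where
  "fin_exp Qs lam \<longleftrightarrow> finite {Q. lam Q \<noteq> 0} \<and> {Q. lam Q \<noteq> 0} \<subseteq> Qs"

definition GS1_star :: "('a::field poly \<Rightarrow> 'g::linordered_ab_group_add) \<Rightarrow> 'a poly set \<Rightarrow> bool" where
  "GS1_star \<nu> Qs \<longleftrightarrow>
     (\<forall>f::'a poly. \<exists>(r::nat) (a::nat \<Rightarrow> 'a) (lam::nat \<Rightarrow> 'a poly \<Rightarrow> nat).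
        (\<forall>i<r. fin_exp Qs (lam i)) \<and>
        f = (\<Sum>i<r. smult (a i) (Qpow (lam i))) \<and>
        (\<forall>i<r. val_ge \<nu> (smult (a i) (Qpow (lam i))) f) \<and>
        (\<forall>i<r. \<forall>Q. lam i Q \<noteq> 0 \<longrightarrow> degree Q \<le> degree f))"

end

theory Submission
  imports Defs
begin

lemma nsm_0[simp]: "nsm 0 a = 0" by (simp add: nsm_def)
lemma nsm_Suc: "nsm (Suc n) a = a + nsm n a" by (simp add: nsm_def add.commute)
lemma nsm_zero[simp]: "nsm n 0 = 0" by (simp add: nsm_def)
lemma nsm_1[simp]: "nsm 1 a = a" by (simp add: nsm_def)
lemma nsm_add_left: "nsm (m + n) a = nsm m a + nsm n a"
  by (induct m) (simp_all add: nsm_Suc add.assoc)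
lemma nsm_add_right: "nsm n (a + b) = nsm n a + nsm n (b::'g::ab_group_add)"
  by (induct n) (simp_all add: nsm_Suc algebra_simps)
lemma nsm_minus: "nsm n (- a) = - nsm n (a::'g::ab_group_add)"
  by (induct n) (simp_all add: nsm_Suc algebra_simps)
lemma nsm_diff: "nsm n (a - b) = nsm n a - nsm n (b::'g::ab_group_add)"
  using nsm_add_right[of n a "-b"] nsm_minus[of n b] by simp
lemma nsm_mult: "nsm m (nsm n a) = nsm (m * n) a"
  by (induct m) (simp_all add: nsm_Suc nsm_add_left)
lemma nsm_mono: "a \<le> b \<Longrightarrow> nsm n a \<le> nsm n (b::'g::ordered_ab_group_add)"
  by (induct n) (simp_all add: nsm_Suc add_mono)
lemma nsm_strict_mono: "n > 0 \<Longrightarrow> a < b \<Longrightarrow> nsm n a < nsm n (b::'g::ordered_ab_group_add)"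
proof (induct n)
  case (Suc n) then show ?case
    by (cases n) (auto simp: nsm_Suc intro: add_strict_left_mono add_less_le_mono nsm_mono)
qed simp
lemma nsm_le_cancel: "n > 0 \<Longrightarrow> nsm n a \<le> nsm n b \<Longrightarrow> a \<le> (b::'g::linordered_ab_group_add)"
  using nsm_strict_mono[of n b a] by (meson not_le)
lemma nsm_less_cancel: "nsm n a < nsm n b \<Longrightarrow> a < (b::'g::linordered_ab_group_add)"
  using nsm_mono[of b a n] by (meson not_le)
lemma nsm_pos: "n > 0 \<Longrightarrow> 0 < a \<Longrightarrow> 0 < nsm n (a::'g::linordered_ab_group_add)"
  using nsm_strict_mono[of n 0 a] by simp

section \<open>Hasse derivatives\<close>

lemma coeff_hasse: "coeff (hasse k f) n = of_nat ((n + k) choose k) * coeff f (n + k)"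
proof -
  have "coeff (hasse k f) n = (\<Sum>i\<le>degree f. if i = n + k then of_nat ((n + k) choose k) * coeff f (n + k) else 0)"
    unfolding hasse_def coeff_sum coeff_monom
  proof (rule sum.cong[OF refl])
    fix i assume "i \<in> {..degree f}"
    show "(if i - k = n then of_nat (i choose k) * coeff f i else 0) =
      (if i = n + k then of_nat ((n + k) choose k) * coeff f (n + k) else 0)"
      by (cases "i < k") (auto simp: binomial_eq_0)
  qed
  also have "\<dots> = of_nat ((n + k) choose k) * coeff f (n + k)"
    by (auto simp: coeff_eq_0)
  finally show ?thesis .
qed

lemma hasse_0[simp]: "hasse 0 f = f"
  by (simp add: poly_eq_iff coeff_hasse)
lemma hasse_add: "hasse k (f + g) = hasse k f + hasse k g"
  by (simp add: poly_eq_iff coeff_hasse algebra_simps)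
lemma hasse_zero[simp]: "hasse k 0 = 0"
  by (simp add: poly_eq_iff coeff_hasse)
lemma hasse_smult: "hasse k (smult c f) = smult c (hasse k f)"
  by (simp add: poly_eq_iff coeff_hasse algebra_simps)
lemma hasse_minus: "hasse k (- f) = - hasse k f"
  by (simp add: poly_eq_iff coeff_hasse algebra_simps)
lemma hasse_sum: "hasse k (\<Sum>i\<in>A. f i) = (\<Sum>i\<in>A. hasse k (f i))"
  by (induct A rule: infinite_finite_induct) (simp_all add: hasse_add)
lemma hasse_gt: "degree f < k \<Longrightarrow> hasse k f = 0"
  by (simp add: poly_eq_iff coeff_hasse coeff_eq_0)
lemma hasse_nz_le: "hasse k f \<noteq> 0 \<Longrightarrow> k \<le> degree f"
  using hasse_gt[of f k] by linarith
lemma hasse_degree: "hasse (degree f) f = [:lead_coeff f:]"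
  by (auto simp: poly_eq_iff coeff_hasse coeff_eq_0 coeff_pCons split: nat.split)
lemma hasse_one: "hasse k 1 = (if k = 0 then 1 else 0)"
  by (auto simp: poly_eq_iff coeff_hasse coeff_eq_0 coeff_pCons split: nat.split)
lemma hasse_const: "k > 0 \<Longrightarrow> hasse k [:c:] = 0"
  by (rule hasse_gt) simp

lemma hasse_X: "hasse k (pCons 0 p) = pCons 0 (hasse k p) + (if k = 0 then 0 else hasse (k - 1) p)"
proof (cases k)
  case 0 then show ?thesis by simp
next
  case (Suc k')
  show ?thesis
  proof (rule poly_eqI)
    fix n show "coeff (hasse k (pCons 0 p)) n = coeff (pCons 0 (hasse k p) + (if k = 0 then 0 else hasse (k - 1) p)) n"
      by (cases n) (simp_all add: Suc coeff_hasse coeff_pCons algebra_simps)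
  qed
qed

lemma pCons0_sum: "pCons 0 (\<Sum>i\<in>A. f i) = (\<Sum>i\<in>A. pCons 0 (f i))"
  by (induct A rule: infinite_finite_induct) (simp_all, metis add_pCons add_0)

lemma hasse_mult: "hasse k (f * g) = (\<Sum>j\<le>k. hasse j f * hasse (k - j) g)"
proof (induct f arbitrary: k rule: pCons_induct)
  case 0 then show ?case by simp
next
  case (pCons a p)
  have e: "pCons a p = [:a:] + pCons 0 p" by simp
  have h1: "hasse j (pCons a p) = (if j = 0 then [:a:] else 0) + pCons 0 (hasse j p) + (if j = 0 then 0 else hasse (j - 1) p)" for j
    by (subst e, simp only: hasse_add hasse_X) (auto simp: hasse_const)
  have "(\<Sum>j\<le>k. hasse j (pCons a p) * hasse (k - j) g) =
     (\<Sum>j\<le>k. (if j = 0 then [:a:] else 0) * hasse (k - j) g) + (\<Sum>j\<le>k. pCons 0 (hasse j p * hasse (k - j) g))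
      + (\<Sum>j\<le>k. (if j = 0 then 0 else hasse (j - 1) p) * hasse (k - j) g)"
    unfolding h1 by (simp add: sum.distrib distrib_right)
  also have "(\<Sum>j\<le>k. (if j = 0 then [:a:] else 0) * hasse (k - j) g) = smult a (hasse k g)"
  proof -
    have "(\<Sum>j\<le>k. (if j = 0 then [:a:] else 0) * hasse (k - j) g) = (\<Sum>j\<le>k. if j = 0 then smult a (hasse k g) else 0)"
      by (rule sum.cong) auto
    then show ?thesis by (simp add: sum.delta)
  qed
  also have "(\<Sum>j\<le>k. pCons 0 (hasse j p * hasse (k - j) g)) = pCons 0 (hasse k (p * g))"
    by (simp add: pCons.hyps(2) pCons0_sum)
  also have "(\<Sum>j\<le>k. (if j = 0 then 0 else hasse (j - 1) p) * hasse (k - j) g) = (if k = 0 then 0 else hasse (k - 1) (p * g))"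
  proof (cases k)
    case (Suc k')
    have "(\<Sum>j\<le>k. (if j = 0 then 0 else hasse (j - 1) p) * hasse (k - j) g) = (\<Sum>j\<le>k'. hasse j p * hasse (k' - j) g)"
      unfolding Suc sum.atMost_Suc_shift by simp
    then show ?thesis by (simp add: Suc pCons.hyps(2))
  qed simp
  finally show ?case by (simp add: hasse_add hasse_X hasse_smult)
qed

section \<open>Valuation basics\<close>

definition wge :: "('a::field poly \<Rightarrow> 'g::linordered_ab_group_add) \<Rightarrow> nat \<Rightarrow> 'g \<Rightarrow> 'g \<Rightarrow> 'a poly \<Rightarrow> bool" where
  "wge \<nu> b c T x \<longleftrightarrow> x = 0 \<or> T \<le> nsm b (\<nu> x) + c"
definition wgt :: "('a::field poly \<Rightarrow> 'g::linordered_ab_group_add) \<Rightarrow> nat \<Rightarrow> 'g \<Rightarrow> 'g \<Rightarrow> 'a poly \<Rightarrow> bool" where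
  "wgt \<nu> b c T x \<longleftrightarrow> x = 0 \<or> T < nsm b (\<nu> x) + c"


context
  fixes \<nu> :: "'a::field poly \<Rightarrow> 'g::linordered_ab_group_add"
  assumes val: "is_valuation \<nu>"
begin

lemma v_mult: "f \<noteq> 0 \<Longrightarrow> g \<noteq> 0 \<Longrightarrow> \<nu> (f * g) = \<nu> f + \<nu> g"
  using val by (simp add: is_valuation_def)
lemma v_add: "f \<noteq> 0 \<Longrightarrow> g \<noteq> 0 \<Longrightarrow> f + g \<noteq> 0 \<Longrightarrow> min (\<nu> f) (\<nu> g) \<le> \<nu> (f + g)"
  using val by (simp add: is_valuation_def)
lemma v_one: "\<nu> 1 = 0"
  using v_mult[of 1 1] by simp
lemma v_m1: "\<nu> (-1) = 0"
proof -
  have "\<nu> (-1) + \<nu> (-1) = 0" using v_mult[of "-1" "-1"] v_one by simp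
  then show ?thesis
    by (metis add_neg_neg add_pos_pos less_irrefl linorder_neqE)
qed
lemma v_uminus: "f \<noteq> 0 \<Longrightarrow> \<nu> (- f) = \<nu> f"
  using v_mult[of "-1" f] v_m1 by simp
lemma v_pow: "f \<noteq> 0 \<Longrightarrow> \<nu> (f ^ n) = nsm n (\<nu> f)"
  by (induct n) (simp_all add: v_one v_mult nsm_Suc)

lemma wge_0[simp]: "wge \<nu> b c T 0" and wgt_0[simp]: "wgt \<nu> b c T 0"
  by (simp_all add: wge_def wgt_def)

lemma wge_add: assumes "wge \<nu> b c T x" "wge \<nu> b c T y" shows "wge \<nu> b c T (x + y)"
proof (cases "x = 0 \<or> y = 0 \<or> x + y = 0")
  case False
  then have "min (\<nu> x) (\<nu> y) \<le> \<nu> (x + y)" by (intro v_add) auto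
  then have m: "nsm b (min (\<nu> x) (\<nu> y)) \<le> nsm b (\<nu> (x + y))" by (rule nsm_mono)
  have "nsm b (min (\<nu> x) (\<nu> y)) = nsm b (\<nu> x) \<or> nsm b (min (\<nu> x) (\<nu> y)) = nsm b (\<nu> y)"
    by (simp add: min_def)
  then have "T \<le> nsm b (min (\<nu> x) (\<nu> y)) + c" using assms False unfolding wge_def wgt_def by auto
  also have "\<dots> \<le> nsm b (\<nu> (x + y)) + c" using m by simp
  finally show ?thesis unfolding wge_def wgt_def by simp
qed (use assms in auto)

lemma wgt_add: assumes "wgt \<nu> b c T x" "wgt \<nu> b c T y" shows "wgt \<nu> b c T (x + y)"
proof (cases "x = 0 \<or> y = 0 \<or> x + y = 0")
  case False
  then have "min (\<nu> x) (\<nu> y) \<le> \<nu> (x + y)" by (intro v_add) auto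
  then have m: "nsm b (min (\<nu> x) (\<nu> y)) \<le> nsm b (\<nu> (x + y))" by (rule nsm_mono)
  have "nsm b (min (\<nu> x) (\<nu> y)) = nsm b (\<nu> x) \<or> nsm b (min (\<nu> x) (\<nu> y)) = nsm b (\<nu> y)"
    by (simp add: min_def)
  then have "T < nsm b (min (\<nu> x) (\<nu> y)) + c" using assms False unfolding wge_def wgt_def by auto
  also have "\<dots> \<le> nsm b (\<nu> (x + y)) + c" using m by simp
  finally show ?thesis unfolding wge_def wgt_def by simp
qed (use assms in auto)

lemma wge_sum: "(\<And>i. i \<in> A \<Longrightarrow> wge \<nu> b c T (f i)) \<Longrightarrow> wge \<nu> b c T (\<Sum>i\<in>A. f i)"
  by (induct A rule: infinite_finite_induct) (auto intro: wge_add)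
lemma wgt_sum: "(\<And>i. i \<in> A \<Longrightarrow> wgt \<nu> b c T (f i)) \<Longrightarrow> wgt \<nu> b c T (\<Sum>i\<in>A. f i)"
  by (induct A rule: infinite_finite_induct) (auto intro: wgt_add)

lemma wge_mult: assumes "wge \<nu> b c1 T1 x" "wge \<nu> b c2 T2 y" shows "wge \<nu> b (c1 + c2) (T1 + T2) (x * y)"
proof (cases "x = 0 \<or> y = 0")
  case False
  then have "nsm b (\<nu> (x * y)) + (c1 + c2) = (nsm b (\<nu> x) + c1) + (nsm b (\<nu> y) + c2)"
    by (simp add: v_mult nsm_add_right algebra_simps)
  moreover have "T1 + T2 \<le> (nsm b (\<nu> x) + c1) + (nsm b (\<nu> y) + c2)"
    using assms False by (intro add_mono) (auto simp: wge_def wgt_def)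
  ultimately show ?thesis unfolding wge_def wgt_def by (simp add: ac_simps)
qed auto

lemma wgt_mult1: assumes "wgt \<nu> b c1 T1 x" "wge \<nu> b c2 T2 y" shows "wgt \<nu> b (c1 + c2) (T1 + T2) (x * y)"
proof (cases "x = 0 \<or> y = 0")
  case False
  then have "nsm b (\<nu> (x * y)) + (c1 + c2) = (nsm b (\<nu> x) + c1) + (nsm b (\<nu> y) + c2)"
    by (simp add: v_mult nsm_add_right algebra_simps)
  moreover have "T1 + T2 < (nsm b (\<nu> x) + c1) + (nsm b (\<nu> y) + c2)"
    using assms False by (intro add_less_le_mono) (auto simp: wge_def wgt_def)
  ultimately show ?thesis unfolding wge_def wgt_def by (simp add: ac_simps)
qed auto

lemma wgt_mult2: assumes "wge \<nu> b c1 T1 x" "wgt \<nu> b c2 T2 y" shows "wgt \<nu> b (c1 + c2) (T1 + T2) (x * y)"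
proof (cases "x = 0 \<or> y = 0")
  case False
  then have "nsm b (\<nu> (x * y)) + (c1 + c2) = (nsm b (\<nu> x) + c1) + (nsm b (\<nu> y) + c2)"
    by (simp add: v_mult nsm_add_right algebra_simps)
  moreover have "T1 + T2 < (nsm b (\<nu> x) + c1) + (nsm b (\<nu> y) + c2)"
    using assms False by (intro add_le_less_mono) (auto simp: wge_def wgt_def)
  ultimately show ?thesis unfolding wge_def wgt_def by (simp add: ac_simps)
qed auto

lemma wge_wgt_trans: "wge \<nu> b c T' x \<Longrightarrow> T < T' \<Longrightarrow> wgt \<nu> b c T x"
  unfolding wge_def wgt_def by auto
lemma wge_trans: "wge \<nu> b c T' x \<Longrightarrow> T \<le> T' \<Longrightarrow> wge \<nu> b c T x"
  unfolding wge_def by auto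
lemma wgt_trans: "wgt \<nu> b c T' x \<Longrightarrow> T \<le> T' \<Longrightarrow> wgt \<nu> b c T x"
  unfolding wgt_def by auto
lemma wgt_wge: "wgt \<nu> b c T x \<Longrightarrow> wge \<nu> b c T x"
  unfolding wge_def wgt_def by auto

lemma v_strict: assumes "x \<noteq> 0" "y = 0 \<or> \<nu> x < \<nu> y" shows "x + y \<noteq> 0 \<and> \<nu> (x + y) = \<nu> x"
proof (cases "y = 0")
  case False
  with assms have lt: "\<nu> x < \<nu> y" by auto
  have nz: "x + y \<noteq> 0"
  proof
    assume "x + y = 0" then have "- x = y" by (simp add: neg_eq_iff_add_eq_0)
    then have "y = - x" by simp
    with lt assms show False by (simp add: v_uminus)
  qed
  have "min (\<nu> x) (\<nu> y) \<le> \<nu> (x + y)" using False assms nz by (intro v_add) auto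
  then have 1: "\<nu> x \<le> \<nu> (x + y)" using lt by simp
  have "min (\<nu> (x + y)) (\<nu> (- y)) \<le> \<nu> ((x + y) + (- y))"
    using False assms nz by (intro v_add) auto
  then have "min (\<nu> (x + y)) (\<nu> y) \<le> \<nu> x" using False by (simp add: v_uminus)
  with lt 1 have "\<nu> (x + y) \<le> \<nu> x" by (simp add: min_def split: if_splits)
  with 1 nz show ?thesis by simp
qed (use assms in simp)

lemma val_ge_trans: "val_ge \<nu> x y \<Longrightarrow> val_ge \<nu> y z \<Longrightarrow> val_ge \<nu> x z"
  unfolding val_ge_def by auto
lemma val_ge_refl: "val_ge \<nu> x x"
  unfolding val_ge_def by auto
lemma val_ge_mult: "R \<noteq> 0 \<Longrightarrow> val_ge \<nu> x y \<Longrightarrow> val_ge \<nu> (x * R) (y * R)"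
  unfolding val_ge_def by (auto simp: v_mult)
lemma val_ge_add: assumes "val_ge \<nu> x T" "val_ge \<nu> y T" shows "val_ge \<nu> (x + y) T"
proof (cases "x = 0 \<or> y = 0 \<or> x + y = 0")
  case False
  then have "min (\<nu> x) (\<nu> y) \<le> \<nu> (x + y)" by (intro v_add) auto
  with assms False show ?thesis unfolding val_ge_def by (auto simp: min_def split: if_splits)
qed (use assms in \<open>auto simp: val_ge_def\<close>)
lemma val_ge_sum: "(\<And>i. i \<in> A \<Longrightarrow> val_ge \<nu> (f i) T) \<Longrightarrow> val_ge \<nu> (\<Sum>i\<in>A. f i) T"
proof (induct A rule: infinite_finite_induct)
  case (insert x F) then show ?case by (simp add: val_ge_add)
qed (simp_all add: val_ge_def)

end

section \<open>Fractions and epsilon\<close>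

lemma frac_le_refl: "frac_le p p"
  by (simp add: frac_le_def)
lemma frac_le_total: "frac_le p q \<or> frac_le q p"
  by (auto simp: frac_le_def)
lemma frac_le_trans:
  assumes "snd q > 0" "frac_le p q" "frac_le q r" shows "frac_le p r"
proof -
  obtain ap np aq nq ar nr where pq: "p = (ap, np)" "q = (aq, nq)" "r = (ar, nr)" by (cases p, cases q, cases r)
  from assms pq have 1: "nsm nq ap \<le> nsm np aq" and 2: "nsm nr aq \<le> nsm nq ar" and nq: "nq > 0"
    by (auto simp: frac_le_def)
  have "nsm nq (nsm nr ap) = nsm nr (nsm nq ap)" by (simp add: nsm_mult mult.commute)
  also have "\<dots> \<le> nsm nr (nsm np aq)" using 1 by (rule nsm_mono)
  also have "\<dots> = nsm np (nsm nr aq)" by (simp add: nsm_mult mult.commute)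
  also have "\<dots> \<le> nsm np (nsm nq ar)" using 2 by (rule nsm_mono)
  also have "\<dots> = nsm nq (nsm np ar)" by (simp add: nsm_mult mult.commute)
  finally have "nsm nr ap \<le> nsm np ar" using nq by (rule nsm_le_cancel[rotated])
  then show ?thesis using pq by (simp add: frac_le_def)
qed

lemma eps_cands_snd: "q \<in> eps_cands \<nu> f \<Longrightarrow> snd q > 0"
  by (auto simp: eps_cands_def)

lemma eps_le_refl: "eps_le \<nu> f f"
  by (auto simp: eps_le_def intro: frac_le_refl)
lemma eps_le_trans: "eps_le \<nu> f g \<Longrightarrow> eps_le \<nu> g h \<Longrightarrow> eps_le \<nu> f h"
  unfolding eps_le_def
proof (intro ballI)
  fix p assume a: "\<forall>p\<in>eps_cands \<nu> f. \<exists>q\<in>eps_cands \<nu> g. frac_le p q"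
    "\<forall>p\<in>eps_cands \<nu> g. \<exists>q\<in>eps_cands \<nu> h. frac_le p q" "p \<in> eps_cands \<nu> f"
  then obtain q where q: "q \<in> eps_cands \<nu> g" "frac_le p q" by blast
  then obtain r where r: "r \<in> eps_cands \<nu> h" "frac_le q r" using a by blast
  show "\<exists>q\<in>eps_cands \<nu> h. frac_le p q"
    using r q frac_le_trans[OF eps_cands_snd[OF q(1)]] by blast
qed
lemma eps_le_total: "eps_le \<nu> f g \<or> eps_le \<nu> g f"
  unfolding eps_le_def using frac_le_total by blast

lemma finite_max_rel:
  assumes "finite A" "A \<noteq> {}"
    and tot: "\<forall>x\<in>A. \<forall>y\<in>A. r x y \<or> r y x"
    and tr: "\<forall>x\<in>A. \<forall>y\<in>A. \<forall>z\<in>A. r x y \<longrightarrow> r y z \<longrightarrow> r x z"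
  shows "\<exists>m\<in>A. \<forall>x\<in>A. r x m"
  using assms
proof (induct A rule: finite_ne_induct)
  case (singleton x) then show ?case by blast
next
  case (insert x F)
  have tot': "\<forall>x\<in>F. \<forall>y\<in>F. r x y \<or> r y x" and tr': "\<forall>x\<in>F. \<forall>y\<in>F. \<forall>z\<in>F. r x y \<longrightarrow> r y z \<longrightarrow> r x z"
    using insert.prems by blast+
  obtain m where m: "m \<in> F" "\<forall>y\<in>F. r y m" using insert.hyps(4)[OF tot' tr'] by blast
  have rxx: "r x x" using insert.prems(1) by blast
  show ?case
  proof (cases "r x m")
    case True with m show ?thesis by blast
  next
    case False
    then have mx: "r m x" using insert.prems(1) m(1) by blast
    have "\<forall>y\<in>insert x F. r y x"
    proof
      fix y assume "y \<in> insert x F"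
      then show "r y x"
      proof
        assume "y \<in> F"
        then have "r y m" using m by blast
        then show "r y x" using insert.prems(2) mx m(1) \<open>y \<in> F\<close> by blast
      qed (use rxx in simp)
    qed
    then show ?thesis by blast
  qed
qed

context
  fixes \<nu> :: "'a::field poly \<Rightarrow> 'g::linordered_ab_group_add"
  assumes val: "is_valuation \<nu>"
begin

lemma v_smult: "c \<noteq> 0 \<Longrightarrow> f \<noteq> 0 \<Longrightarrow> \<nu> (smult c f) = \<nu> [:c:] + \<nu> f"
  using v_mult[OF val, of "[:c:]" f] by simp

lemma eps_cands_smult: assumes "c \<noteq> 0" shows "eps_cands \<nu> (smult c f) = eps_cands \<nu> f"
proof (cases "f = 0")
  case False
  have "\<nu> (smult c f) - \<nu> (hasse k (smult c f)) = \<nu> f - \<nu> (hasse k f)" if "hasse k f \<noteq> 0" for k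
    using that False assms by (simp add: hasse_smult v_smult)
  then show ?thesis using assms unfolding eps_cands_def by (auto simp: hasse_smult)
qed simp

lemma key_setup:
  assumes key: "key_poly \<nu> R"
  obtains b D where "1 \<le> b" "b \<le> degree R" "hasse b R \<noteq> 0" "D = \<nu> R - \<nu> (hasse b R)"
    "\<forall>k. wge \<nu> b (nsm k D) (nsm b (\<nu> R)) (hasse k R)"
    "\<forall>k>b. wgt \<nu> b (nsm k D) (nsm b (\<nu> R)) (hasse k R)"
    "\<forall>q\<in>eps_cands \<nu> R. frac_le q (D, b)"
    "\<forall>c j. degree c < degree R \<longrightarrow> 1 \<le> j \<longrightarrow> wgt \<nu> b (nsm j D) (nsm b (\<nu> c)) (hasse j c)"
proof -
  from key have R1: "degree R \<ge> 1" and lc: "lead_coeff R = 1" by (auto simp: key_poly_def)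
  then have R0: "R \<noteq> 0" by auto
  define K where "K = {k. 1 \<le> k \<and> k \<le> degree R \<and> hasse k R \<noteq> 0}"
  define cand where "cand k = (\<nu> R - \<nu> (hasse k R), k)" for k
  have candsR: "eps_cands \<nu> R = cand ` K" unfolding eps_cands_def K_def cand_def image_def by blast
  have finK: "finite K" by (simp add: K_def)
  have "hasse (degree R) R \<noteq> 0" unfolding hasse_degree using lc by simp
  then have degK: "degree R \<in> K" using R1 unfolding K_def by blast
  have "\<exists>m\<in>K. \<forall>x\<in>K. frac_le (cand x) (cand m)"
  proof (rule finite_max_rel[where r = "\<lambda>x y. frac_le (cand x) (cand y)"])
    show "\<forall>x\<in>K. \<forall>y\<in>K. frac_le (cand x) (cand y) \<or> frac_le (cand y) (cand x)"
      using frac_le_total[where p="cand _" and q="cand _"] by blast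
    show "\<forall>x\<in>K. \<forall>y\<in>K. \<forall>z\<in>K. frac_le (cand x) (cand y) \<longrightarrow> frac_le (cand y) (cand z) \<longrightarrow> frac_le (cand x) (cand z)"
    proof (intro ballI impI)
      fix x y z assume "y \<in> K" "frac_le (cand x) (cand y)" "frac_le (cand y) (cand z)"
      moreover have "snd (cand y) > 0" using \<open>y \<in> K\<close> unfolding cand_def K_def by simp
      ultimately show "frac_le (cand x) (cand z)" using frac_le_trans[where p="cand x" and q="cand y" and r="cand z"] by blast
    qed
    show "finite K" by (rule finK)
    show "K \<noteq> {}" using degK by blast
  qed
  then obtain m where m: "m \<in> K" "\<forall>x\<in>K. frac_le (cand x) (cand m)" by blast
  define A where "A = {k\<in>K. frac_le (cand m) (cand k)}"
  have finA: "finite A" using finK by (simp add: A_def)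
  have mA: "m \<in> A" by (simp add: A_def m frac_le_refl)
  define b where "b = Max A"
  have bA: "b \<in> A" using finA mA unfolding b_def by (intro Max_in) auto
  then have bK: "b \<in> K" and mb: "frac_le (cand m) (cand b)" by (auto simp: A_def)
  define D where "D = \<nu> R - \<nu> (hasse b R)"
  have cb: "cand b = (D, b)" by (simp add: cand_def D_def)
  have b1: "1 \<le> b" "b \<le> degree R" "hasse b R \<noteq> 0" using bK by (auto simp: K_def)
  have kb: "frac_le (cand k) (D, b)" if "k \<in> K" for k
  proof -
    have "frac_le (cand k) (cand m)" using m that by blast
    moreover have "snd (cand m) > 0" using m(1) by (simp add: cand_def K_def)
    ultimately have "frac_le (cand k) (cand b)" using frac_le_trans[where p="cand k" and q="cand m" and r="cand b"] mb by blast
    then show ?thesis using cb by simp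
  qed
  have Cands: "\<forall>q\<in>eps_cands \<nu> R. frac_le q (D, b)" using kb candsR by auto
  have P1: "\<forall>k. wge \<nu> b (nsm k D) (nsm b (\<nu> R)) (hasse k R)"
  proof
    fix k
    show "wge \<nu> b (nsm k D) (nsm b (\<nu> R)) (hasse k R)"
    proof (cases "hasse k R = 0 \<or> k = 0")
      case False
      then have "k \<in> K" using hasse_nz_le[of k R] by (auto simp: K_def)
      then have "nsm b (\<nu> R - \<nu> (hasse k R)) \<le> nsm k D" using kb by (simp add: frac_le_def cand_def)
      then show ?thesis by (simp add: wge_def nsm_diff algebra_simps)
    qed (auto simp: wge_def)
  qed
  have P2: "\<forall>k>b. wgt \<nu> b (nsm k D) (nsm b (\<nu> R)) (hasse k R)"
  proof (intro allI impI)
    fix k assume kb': "k > b"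
    show "wgt \<nu> b (nsm k D) (nsm b (\<nu> R)) (hasse k R)"
    proof (cases "hasse k R = 0")
      case False
      then have kK: "k \<in> K" using hasse_nz_le[of k R] kb' b1 by (auto simp: K_def)
      have "k \<notin> A"
      proof
        assume "k \<in> A" then have "k \<le> b" unfolding b_def using finA by simp
        with kb' show False by simp
      qed
      then have n1: "\<not> frac_le (cand m) (cand k)" using kK by (simp add: A_def)
      have "\<not> frac_le (D, b) (cand k)"
      proof
        assume "frac_le (D, b) (cand k)"
        then have "frac_le (cand m) (cand k)"
          using frac_le_trans[where p="cand m" and q="cand b" and r="cand k"] mb cb b1 by simp
        with n1 show False by blast
      qed
      then have "nsm b (\<nu> R - \<nu> (hasse k R)) < nsm k D" by (simp add: frac_le_def cand_def)
      then show ?thesis by (simp add: wgt_def nsm_diff algebra_simps)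
    qed (auto simp: wgt_def)
  qed
  have Cc: "\<forall>c j. degree c < degree R \<longrightarrow> 1 \<le> j \<longrightarrow> wgt \<nu> b (nsm j D) (nsm b (\<nu> c)) (hasse j c)"
  proof (intro allI impI)
    fix c :: "'a poly" and j :: nat assume dc: "degree c < degree R" and j1: "1 \<le> j"
    show "wgt \<nu> b (nsm j D) (nsm b (\<nu> c)) (hasse j c)"
    proof (cases "hasse j c = 0")
      case False
      then have jc: "j \<le> degree c" by (rule hasse_nz_le)
      have "\<not> eps_le \<nu> R c"
      proof
        assume "eps_le \<nu> R c"
        moreover have "degree c \<ge> 1" using jc j1 by simp
        ultimately have "degree c \<ge> degree R" using key unfolding key_poly_def by blast
        with dc show False by simp
      qed
      then obtain p where p: "p \<in> eps_cands \<nu> R" "\<forall>q\<in>eps_cands \<nu> c. \<not> frac_le p q"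
        unfolding eps_le_def by blast
      have qc: "(\<nu> c - \<nu> (hasse j c), j) \<in> eps_cands \<nu> c"
        using False jc j1 unfolding eps_cands_def by blast
      have "\<not> frac_le (D, b) (\<nu> c - \<nu> (hasse j c), j)"
      proof
        assume "frac_le (D, b) (\<nu> c - \<nu> (hasse j c), j)"
        moreover have "frac_le p (D, b)" using Cands p(1) by blast
        ultimately have "frac_le p (\<nu> c - \<nu> (hasse j c), j)"
          using frac_le_trans[where p=p and q="(D,b)"] b1 by simp
        with p(2) qc show False by blast
      qed
      then have "nsm b (\<nu> c - \<nu> (hasse j c)) < nsm j D" by (simp add: frac_le_def)
      then show ?thesis by (simp add: wgt_def nsm_diff algebra_simps)
    qed (auto simp: wgt_def)
  qed
  show ?thesis using that[OF b1 D_def P1 P2 Cands Cc] .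
qed

end

context
  fixes \<nu> :: "'a::field poly \<Rightarrow> 'g::linordered_ab_group_add" and R :: "'a poly" and b :: nat and D :: 'g
  assumes val: "is_valuation \<nu>" and R0: "R \<noteq> 0" and b1: "1 \<le> b"
    and P1: "\<forall>k. wge \<nu> b (nsm k D) (nsm b (\<nu> R)) (hasse k R)"
    and P2: "\<forall>k>b. wgt \<nu> b (nsm k D) (nsm b (\<nu> R)) (hasse k R)"
begin

lemma wge_mult': "wge \<nu> b c1 T1 x \<Longrightarrow> wge \<nu> b c2 T2 y \<Longrightarrow> c = c1 + c2 \<Longrightarrow> T = T1 + T2 \<Longrightarrow> wge \<nu> b c T (x * y)"
  using wge_mult[OF val] by blast
lemma wgt_mult1': "wgt \<nu> b c1 T1 x \<Longrightarrow> wge \<nu> b c2 T2 y \<Longrightarrow> c = c1 + c2 \<Longrightarrow> T = T1 + T2 \<Longrightarrow> wgt \<nu> b c T (x * y)"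
  using wgt_mult1[OF val] by blast
lemma wgt_mult2': "wge \<nu> b c1 T1 x \<Longrightarrow> wgt \<nu> b c2 T2 y \<Longrightarrow> c = c1 + c2 \<Longrightarrow> T = T1 + T2 \<Longrightarrow> wgt \<nu> b c T (x * y)"
  using wgt_mult2[OF val] by blast

lemma RpowS: "\<nu> (R ^ Suc i) = \<nu> R + \<nu> (R ^ i)"
  using v_mult[OF val, of R "R ^ i"] R0 by simp

lemma nsmT: "nsm b (\<nu> (R * R ^ i)) = nsm b (\<nu> R) + nsm b (\<nu> (R ^ i))"
  using RpowS[of i] by (simp add: nsm_add_right)

lemma offs: "k \<le> m \<Longrightarrow> nsm m D = nsm k D + nsm (m - k) D"
  by (simp add: nsm_add_left[symmetric])

lemma B1: "wge \<nu> b (nsm m D) (nsm b (\<nu> (R ^ i))) (hasse m (R ^ i))"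
proof (induct i arbitrary: m)
  case 0 then show ?case by (simp add: hasse_one wge_def v_one[OF val])
next
  case (Suc i)
  have "hasse m (R ^ Suc i) = (\<Sum>k\<le>m. hasse k R * hasse (m - k) (R ^ i))"
    by (simp add: hasse_mult)
  also have "wge \<nu> b (nsm m D) (nsm b (\<nu> (R ^ Suc i))) \<dots>"
  proof (rule wge_sum[OF val])
    fix k assume "k \<in> {..m}"
    then show "wge \<nu> b (nsm m D) (nsm b (\<nu> (R ^ Suc i))) (hasse k R * hasse (m - k) (R ^ i))"
      by (intro wge_mult'[OF spec[OF P1] Suc]) (simp_all add: offs nsmT)
  qed
  finally show ?case .
qed

lemma B3: "b * i < l \<Longrightarrow> wgt \<nu> b (nsm l D) (nsm b (\<nu> (R ^ i))) (hasse l (R ^ i))"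
proof (induct i arbitrary: l)
  case 0 then show ?case by (simp add: hasse_one wgt_def)
next
  case (Suc i)
  have "hasse l (R ^ Suc i) = (\<Sum>k\<le>l. hasse k R * hasse (l - k) (R ^ i))"
    by (simp add: hasse_mult)
  also have "wgt \<nu> b (nsm l D) (nsm b (\<nu> (R ^ Suc i))) \<dots>"
  proof (rule wgt_sum[OF val])
    fix k assume k: "k \<in> {..l}"
    show "wgt \<nu> b (nsm l D) (nsm b (\<nu> (R ^ Suc i))) (hasse k R * hasse (l - k) (R ^ i))"
    proof (cases "b < k")
      case True
      then show ?thesis using k
        by (intro wgt_mult1'[OF P2[rule_format, OF True] B1]) (simp_all add: offs nsmT)
    next
      case False
      then have "b * i < l - k" using Suc.prems by simp
      then show ?thesis using k
        by (intro wgt_mult2'[OF spec[OF P1] Suc.hyps]) (simp_all add: offs nsmT)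
    qed
  qed
  finally show ?case .
qed

lemma B2: "\<exists>E. hasse (b * i) (R ^ i) = (hasse b R) ^ i + E \<and> wgt \<nu> b (nsm (b * i) D) (nsm b (\<nu> (R ^ i))) E"
proof (induct i)
  case 0 then show ?case by (simp add: hasse_one wgt_def)
next
  case (Suc i)
  then obtain E where E: "hasse (b * i) (R ^ i) = (hasse b R) ^ i + E" "wgt \<nu> b (nsm (b * i) D) (nsm b (\<nu> (R ^ i))) E"
    by blast
  define m where "m = b * Suc i"
  have bm: "b \<in> {..m}" by (simp add: m_def)
  have mb: "m - b = b * i" by (simp add: m_def)
  have "hasse m (R ^ Suc i) = (\<Sum>k\<le>m. hasse k R * hasse (m - k) (R ^ i))"
    by (simp add: hasse_mult)
  also have "\<dots> = hasse b R * hasse (m - b) (R ^ i) + (\<Sum>k\<in>{..m} - {b}. hasse k R * hasse (m - k) (R ^ i))"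
    using bm by (simp add: sum.remove)
  also have "\<dots> = (hasse b R) ^ Suc i + (hasse b R * E + (\<Sum>k\<in>{..m} - {b}. hasse k R * hasse (m - k) (R ^ i)))"
    by (simp add: mb E(1) algebra_simps)
  finally have eq: "hasse m (R ^ Suc i) = (hasse b R) ^ Suc i + (hasse b R * E + (\<Sum>k\<in>{..m} - {b}. hasse k R * hasse (m - k) (R ^ i)))" .
  have w1: "wgt \<nu> b (nsm m D) (nsm b (\<nu> (R ^ Suc i))) (hasse b R * E)"
    by (rule wgt_mult2'[OF spec[OF P1] E(2)]) (simp_all add: m_def nsmT nsm_add_left[symmetric])
  have w2: "wgt \<nu> b (nsm m D) (nsm b (\<nu> (R ^ Suc i))) (\<Sum>k\<in>{..m} - {b}. hasse k R * hasse (m - k) (R ^ i))"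
  proof (rule wgt_sum[OF val])
    fix k assume k: "k \<in> {..m} - {b}"
    show "wgt \<nu> b (nsm m D) (nsm b (\<nu> (R ^ Suc i))) (hasse k R * hasse (m - k) (R ^ i))"
    proof (cases "b < k")
      case True
      then show ?thesis using k
        by (intro wgt_mult1'[OF P2[rule_format, OF True] B1]) (simp_all add: offs nsmT)
    next
      case False
      then have "b * i < m - k" using k by (auto simp: m_def)
      then show ?thesis using k
        by (intro wgt_mult2'[OF spec[OF P1] B3]) (simp_all add: offs nsmT)
    qed
  qed
  show ?case using eq wgt_add[OF val w1 w2] by (auto simp: m_def)
qed

lemma wge_self: "wge \<nu> b 0 (nsm b (\<nu> x)) x"
  by (simp add: wge_def)

lemma core:
  assumes Cc: "\<And>i j. 1 \<le> j \<Longrightarrow> wgt \<nu> b (nsm j D) (nsm b (\<nu> (c i))) (hasse j (c i))"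
    and ts: "t \<le> s" and ct: "c t \<noteq> 0"
    and lt: "\<And>i. i \<le> s \<Longrightarrow> i < t \<Longrightarrow> c i = 0 \<or> \<nu> (c t * R ^ t) \<le> \<nu> (c i * R ^ i)"
    and gt: "\<And>i. i \<le> s \<Longrightarrow> t < i \<Longrightarrow> c i = 0 \<or> \<nu> (c t * R ^ t) < \<nu> (c i * R ^ i)"
  shows "\<exists>E. hasse (b * t) (\<Sum>i\<le>s. c i * R ^ i) = c t * (hasse b R) ^ t + E \<and>
     wgt \<nu> b (nsm (b * t) D) (nsm b (\<nu> (c t * R ^ t))) E"
proof -
  define \<mu> where "\<mu> = \<nu> (c t * R ^ t)"
  have Ts: "nsm b (\<nu> (c i * R ^ i)) = nsm b (\<nu> (c i)) + nsm b (\<nu> (R ^ i))" if "c i \<noteq> 0" for i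
    using v_mult[OF val, of "c i" "R ^ i"] that R0 by (simp add: nsm_add_right)
  define G where "G i j = hasse j (c i) * hasse (b * t - j) (R ^ i)" for i j
  obtain Et where Et: "hasse (b * t) (R ^ t) = (hasse b R) ^ t + Et" "wgt \<nu> b (nsm (b * t) D) (nsm b (\<nu> (R ^ t))) Et"
    using B2 by blast
  have "hasse (b * t) (\<Sum>i\<le>s. c i * R ^ i) = (\<Sum>i\<le>s. \<Sum>j\<le>b * t. G i j)"
    by (simp add: hasse_sum hasse_mult G_def)
  also have "\<dots> = (\<Sum>j\<le>b * t. G t j) + (\<Sum>i\<in>{..s} - {t}. \<Sum>j\<le>b * t. G i j)"
    using ts by (simp add: sum.remove)
  also have "(\<Sum>j\<le>b * t. G t j) = G t 0 + (\<Sum>j\<in>{..b * t} - {0}. G t j)"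
    by (simp add: sum.remove)
  also have "G t 0 = c t * (hasse b R) ^ t + c t * Et"
    by (simp add: G_def Et(1) algebra_simps)
  finally have eq: "hasse (b * t) (\<Sum>i\<le>s. c i * R ^ i) = c t * (hasse b R) ^ t +
      (c t * Et + (\<Sum>j\<in>{..b * t} - {0}. G t j) + (\<Sum>i\<in>{..s} - {t}. \<Sum>j\<le>b * t. G i j))"
    by (simp add: algebra_simps)
  have wa: "wgt \<nu> b (nsm (b * t) D) (nsm b \<mu>) (c t * Et)"
    by (rule wgt_mult2'[OF wge_self Et(2)]) (simp_all add: \<mu>_def Ts[OF ct])
  have wb: "wgt \<nu> b (nsm (b * t) D) (nsm b \<mu>) (\<Sum>j\<in>{..b * t} - {0}. G t j)"
  proof (rule wgt_sum[OF val])
    fix j assume j: "j \<in> {..b * t} - {0}"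
    show "wgt \<nu> b (nsm (b * t) D) (nsm b \<mu>) (G t j)"
      unfolding G_def using j
      by (intro wgt_mult1'[OF Cc B1]) (simp_all add: \<mu>_def Ts[OF ct] offs)
  qed
  have wc: "wgt \<nu> b (nsm (b * t) D) (nsm b \<mu>) (\<Sum>i\<in>{..s} - {t}. \<Sum>j\<le>b * t. G i j)"
  proof (rule wgt_sum[OF val])
    fix i assume i: "i \<in> {..s} - {t}"
    show "wgt \<nu> b (nsm (b * t) D) (nsm b \<mu>) (\<Sum>j\<le>b * t. G i j)"
    proof (cases "c i = 0")
      case True then show ?thesis by (simp add: G_def wgt_def)
    next
      case ci: False
      show ?thesis
      proof (rule wgt_sum[OF val])
        fix j assume j: "j \<in> {..b * t}"
        show "wgt \<nu> b (nsm (b * t) D) (nsm b \<mu>) (G i j)"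
        proof (cases "t < i")
          case True
          then have "\<mu> < \<nu> (c i * R ^ i)" using gt[of i] i ci by (auto simp: \<mu>_def)
          then have lt': "nsm b \<mu> < nsm b (\<nu> (c i * R ^ i))" using b1 by (intro nsm_strict_mono) auto
          have "wge \<nu> b (nsm (b * t) D) (nsm b (\<nu> (c i * R ^ i))) (G i j)"
          proof (cases "j = 0")
            case True then show ?thesis unfolding G_def
              by (intro wge_mult'[OF wge_self B1]) (simp_all add: Ts[OF ci])
          next
            case False then show ?thesis unfolding G_def using j
              by (intro wge_mult'[OF wgt_wge[OF val Cc] B1]) (simp_all add: Ts[OF ci] offs)
          qed
          then show ?thesis using lt' by (rule wge_wgt_trans[OF val])
        next
          case False
          then have it: "i < t" using i by auto
          then have "\<mu> \<le> \<nu> (c i * R ^ i)" using lt[of i] i ci by (auto simp: \<mu>_def)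
          then have le': "nsm b \<mu> \<le> nsm b (\<nu> (c i * R ^ i))" by (rule nsm_mono)
          have "wgt \<nu> b (nsm (b * t) D) (nsm b (\<nu> (c i * R ^ i))) (G i j)"
          proof (cases "j = 0")
            case True
            have "b * i < b * t - 0" using it b1 by simp
            then show ?thesis unfolding G_def True
              by (intro wgt_mult2'[OF wge_self B3]) (simp_all add: Ts[OF ci])
          next
            case False then show ?thesis unfolding G_def using j
              by (intro wgt_mult1'[OF Cc B1]) (simp_all add: Ts[OF ci] offs)
          qed
          then show ?thesis using le' by (rule wgt_trans[OF val])
        qed
      qed
    qed
  qed
  show ?thesis using eq wgt_add[OF val wgt_add[OF val wa wb] wc] by (auto simp: \<mu>_def)
qed

end

lemma rep_shift:
  fixes R :: "'a::field poly"
  assumes "q = (\<Sum>i\<le>s. d i * R ^ i)"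
  shows "r + q * R = (\<Sum>i\<le>Suc s. (case i of 0 \<Rightarrow> r | Suc j \<Rightarrow> d j) * R ^ i)"
proof -
  have "q * R = (\<Sum>i\<le>s. d i * R ^ Suc i)" unfolding assms by (subst sum_distrib_right) (simp add: mult_ac)
  then show ?thesis unfolding sum.atMost_Suc_shift by simp
qed

lemma rep_exists:
  fixes R :: "'a::field poly"
  assumes R1: "degree R \<ge> 1"
  shows "\<exists>s d. q = (\<Sum>i\<le>s. d i * R ^ i) \<and> (\<forall>i. degree (d i) < degree R)"
proof (induct "degree q" arbitrary: q rule: less_induct)
  case less
  show ?case
  proof (cases "degree q < degree R")
    case True
    then show ?thesis using R1
      by (intro exI[of _ 0] exI[of _ "\<lambda>i. if i = 0 then q else 0"]) auto
  next
    case False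
    then have "degree (q div R) < degree q" using R1 by (intro degree_div_less) auto
    then obtain s d where d: "q div R = (\<Sum>i\<le>s. d i * R ^ i)" "\<forall>i. degree (d i) < degree R"
      using less by blast
    have R0: "R \<noteq> 0" using R1 by auto
    have "q = q mod R + q div R * R" by simp
    also have "\<dots> = (\<Sum>i\<le>Suc s. (case i of 0 \<Rightarrow> q mod R | Suc j \<Rightarrow> d j) * R ^ i)"
      by (rule rep_shift[OF d(1)])
    finally have "q = (\<Sum>i\<le>Suc s. (case i of 0 \<Rightarrow> q mod R | Suc j \<Rightarrow> d j) * R ^ i)" .
    moreover have "\<forall>i. degree (case i of 0 \<Rightarrow> q mod R | Suc j \<Rightarrow> d j) < degree R"
    proof
      fix i show "degree (case i of 0 \<Rightarrow> q mod R | Suc j \<Rightarrow> d j) < degree R"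
        using d(2) degree_mod_less[OF R0, of q] R1 by (cases i) auto
    qed
    ultimately show ?thesis by blast
  qed
qed

context
  fixes \<nu> :: "'a::field poly \<Rightarrow> 'g::linordered_ab_group_add"
  assumes val: "is_valuation \<nu>"
begin

lemma claim:
  assumes key: "key_poly \<nu> R" and fs: "f = (\<Sum>i\<le>s. c i * R ^ i)"
    and dc: "\<forall>i. degree (c i) < degree R" and f0: "f \<noteq> 0" and le: "eps_le \<nu> f R"
  shows "\<forall>i\<le>s. c i = 0 \<or> \<nu> f \<le> \<nu> (c i * R ^ i)"
proof (rule ccontr)
  assume "\<not> ?thesis"
  then obtain i0 where i0: "i0 \<le> s" "c i0 \<noteq> 0" "\<nu> (c i0 * R ^ i0) < \<nu> f" by (auto simp: not_le)
  obtain b D where b1: "1 \<le> b" "b \<le> degree R" and hb: "hasse b R \<noteq> 0" and Dd: "D = \<nu> R - \<nu> (hasse b R)"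
    and P1: "\<forall>k. wge \<nu> b (nsm k D) (nsm b (\<nu> R)) (hasse k R)"
    and P2: "\<forall>k>b. wgt \<nu> b (nsm k D) (nsm b (\<nu> R)) (hasse k R)"
    and Cands: "\<forall>q\<in>eps_cands \<nu> R. frac_le q (D, b)"
    and Cc: "\<forall>c j. degree c < degree R \<longrightarrow> 1 \<le> j \<longrightarrow> wgt \<nu> b (nsm j D) (nsm b (\<nu> c)) (hasse j c)"
    using key_setup[OF val key] by metis
  have R0: "R \<noteq> 0" using key by (auto simp: key_poly_def)
  define N where "N = {i. i \<le> s \<and> c i \<noteq> 0}"
  have finN: "finite N" by (simp add: N_def)
  have i0N: "i0 \<in> N" using i0 by (simp add: N_def)
  define V where "V = (\<lambda>i. \<nu> (c i * R ^ i)) ` N"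
  define \<mu> where "\<mu> = Min V"
  have finV: "finite V" and V0: "V \<noteq> {}" using finN i0N by (auto simp: V_def)
  have muV: "\<mu> \<in> V" using finV V0 by (simp add: \<mu>_def)
  have mule: "\<mu> \<le> \<nu> (c i * R ^ i)" if "i \<in> N" for i
    using that finV by (auto simp: \<mu>_def V_def)
  define M where "M = {i \<in> N. \<nu> (c i * R ^ i) = \<mu>}"
  have finM: "finite M" and M0: "M \<noteq> {}" using finN muV by (auto simp: M_def V_def)
  define t where "t = Max M"
  have tM: "t \<in> M" using finM M0 by (simp add: t_def)
  then have ts: "t \<le> s" and ct: "c t \<noteq> 0" and tmu: "\<nu> (c t * R ^ t) = \<mu>" by (auto simp: M_def N_def)
  have lt: "c i = 0 \<or> \<nu> (c t * R ^ t) \<le> \<nu> (c i * R ^ i)" if "i \<le> s" "i < t" for i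
    using mule[of i] that tmu by (auto simp: N_def)
  have gt: "c i = 0 \<or> \<nu> (c t * R ^ t) < \<nu> (c i * R ^ i)" if "i \<le> s" "t < i" for i
  proof (cases "c i = 0")
    case False
    then have iN: "i \<in> N" using that by (simp add: N_def)
    have "i \<notin> M"
    proof
      assume "i \<in> M" then have "i \<le> t" using finM by (simp add: t_def)
      with that show False by simp
    qed
    then have "\<nu> (c i * R ^ i) \<noteq> \<mu>" using iN by (simp add: M_def)
    then show ?thesis using mule[OF iN] tmu by auto
  qed simp
  obtain E where E: "hasse (b * t) f = c t * (hasse b R) ^ t + E"
      "wgt \<nu> b (nsm (b * t) D) (nsm b (\<nu> (c t * R ^ t))) E"
    using core[OF val R0 b1(1) P1 P2, of c t s] Cc dc ts ct lt gt fs by blast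
  define main where "main = c t * (hasse b R) ^ t"
  have main0: "main \<noteq> 0" using ct hb by (simp add: main_def)
  have vmain: "\<nu> main = \<mu> - nsm t D"
  proof -
    have "\<nu> main = \<nu> (c t) + nsm t (\<nu> (hasse b R))"
      using v_mult[OF val, of "c t" "(hasse b R) ^ t"] v_pow[OF val hb] ct hb by (simp add: main_def)
    moreover have "\<mu> = \<nu> (c t) + nsm t (\<nu> R)"
      using v_mult[OF val, of "c t" "R ^ t"] v_pow[OF val R0] ct R0 tmu by simp
    moreover have "\<nu> (hasse b R) = \<nu> R - D" using Dd by simp
    ultimately show ?thesis by (simp add: nsm_diff algebra_simps)
  qed
  have nsm_main: "nsm b (\<nu> main) = nsm b \<mu> - nsm (b * t) D"
    by (simp add: vmain nsm_diff nsm_mult)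
  have "E = 0 \<or> \<nu> main < \<nu> E"
  proof (cases "E = 0")
    case False
    then have "nsm b \<mu> < nsm b (\<nu> E) + nsm (b * t) D" using E(2) tmu by (simp add: wgt_def)
    moreover have "nsm b (\<nu> main) + nsm (b * t) D = nsm b \<mu>" using nsm_main by simp
    ultimately have "nsm b (\<nu> main) < nsm b (\<nu> E)" by (metis add_less_cancel_right)
    then show ?thesis by (simp add: nsm_less_cancel)
  qed simp
  from v_strict[OF val main0 this] have hf: "hasse (b * t) f \<noteq> 0" "\<nu> (hasse (b * t) f) = \<nu> main"
    using E(1) by (simp_all add: main_def)
  have mu_lt: "\<mu> < \<nu> f" using mule[OF i0N] i0(3) by simp
  show False
  proof (cases "t = 0")
    case True
    then have "\<nu> f = \<mu>" using hf vmain by simp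
    with mu_lt show False by simp
  next
    case False
    then have k1: "1 \<le> b * t" using b1 by simp
    have kd: "b * t \<le> degree f" using hasse_nz_le[OF hf(1)] .
    have pc: "(\<nu> f - \<nu> (hasse (b * t) f), b * t) \<in> eps_cands \<nu> f"
      unfolding eps_cands_def using k1 kd hf(1) by blast
    then obtain q where q: "q \<in> eps_cands \<nu> R" "frac_le (\<nu> f - \<nu> (hasse (b * t) f), b * t) q"
      using le unfolding eps_le_def by blast
    have "frac_le (\<nu> f - \<nu> (hasse (b * t) f), b * t) (D, b)"
      using frac_le_trans[OF eps_cands_snd[OF q(1)] q(2)] Cands q(1) by blast
    then have le1: "nsm b (\<nu> f - \<nu> main) \<le> nsm (b * t) D" by (simp add: frac_le_def hf(2))
    have "nsm b \<mu> < nsm b (\<nu> f)" using mu_lt b1 by (intro nsm_strict_mono) auto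
    then have "nsm (b * t) D < nsm b (\<nu> f - \<nu> main)"
      by (simp add: nsm_diff nsm_main algebra_simps)
    with le1 show False by simp
  qed
qed

lemma division_good:
  assumes key: "key_poly \<nu> R" and f0: "f \<noteq> 0" and le: "eps_le \<nu> f R"
  shows "val_ge \<nu> (f div R * R) f \<and> val_ge \<nu> (f mod R) f"
proof -
  have R1: "degree R \<ge> 1" using key by (simp add: key_poly_def)
  then have R0: "R \<noteq> 0" by auto
  obtain s d where d: "f div R = (\<Sum>i\<le>s. d i * R ^ i)" "\<forall>i. degree (d i) < degree R"
    using rep_exists[OF R1] by blast
  define c where "c i = (case i of 0 \<Rightarrow> f mod R | Suc j \<Rightarrow> d j)" for i
  have fs: "f = (\<Sum>i\<le>Suc s. c i * R ^ i)"
    unfolding c_def using rep_shift[OF d(1), of "f mod R"] by simp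
  have dc: "\<forall>i. degree (c i) < degree R"
  proof
    fix i show "degree (c i) < degree R"
      using d(2) degree_mod_less[OF R0, of f] R1 by (cases i) (auto simp: c_def)
  qed
  have cl: "\<forall>i\<le>Suc s. c i = 0 \<or> \<nu> f \<le> \<nu> (c i * R ^ i)"
    by (rule claim[OF key fs dc f0 le])
  have "val_ge \<nu> (f mod R) f" using cl[rule_format, of 0] f0 by (auto simp: c_def val_ge_def)
  moreover have "val_ge \<nu> (f div R * R) f"
  proof -
    have "f div R * R = (\<Sum>i\<le>s. d i * R ^ Suc i)" unfolding d(1) sum_distrib_right by (simp add: mult_ac)
    also have "val_ge \<nu> \<dots> f"
    proof (rule val_ge_sum[OF val])
      fix i assume "i \<in> {..s}"
      then show "val_ge \<nu> (d i * R ^ Suc i) f" using cl[rule_format, of "Suc i"] f0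
        by (auto simp: c_def val_ge_def)
    qed
    finally show ?thesis .
  qed
  ultimately show ?thesis by simp
qed

end

definition EXP :: "('a::field poly \<Rightarrow> 'g::linordered_ab_group_add) \<Rightarrow> 'a poly set \<Rightarrow> 'a poly \<Rightarrow> nat \<Rightarrow> 'a poly \<Rightarrow> bool" where
  "EXP \<nu> S f d T \<longleftrightarrow> (\<exists>(r::nat) (a::nat \<Rightarrow> 'a) (lam::nat \<Rightarrow> 'a poly \<Rightarrow> nat).
        (\<forall>i<r. fin_exp S (lam i)) \<and>
        f = (\<Sum>i<r. smult (a i) (Qpow (lam i))) \<and>
        (\<forall>i<r. val_ge \<nu> (smult (a i) (Qpow (lam i))) T) \<and>
        (\<forall>i<r. \<forall>Q. lam i Q \<noteq> 0 \<longrightarrow> degree Q \<le> d))"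

lemma GS1_EXP: "GS1_star \<nu> S \<longleftrightarrow> (\<forall>f. EXP \<nu> S f (degree f) f)"
  unfolding GS1_star_def EXP_def by simp

lemma EXP_zero: "EXP \<nu> S 0 d T"
  unfolding EXP_def by (rule exI[of _ 0]) simp

lemma Qpow_0: "Qpow (\<lambda>_. 0) = 1"
  by (simp add: Qpow_def)

lemma EXP_const: assumes "degree f = 0" shows "EXP \<nu> S f d f"
proof -
  have f: "f = smult (coeff f 0) (Qpow (\<lambda>_. 0))" using degree_0_id[OF assms] by (simp add: Qpow_0)
  have "fin_exp S (\<lambda>_. 0)" by (simp add: fin_exp_def)
  moreover have "val_ge \<nu> f f" by (simp add: val_ge_def)
  ultimately show ?thesis unfolding EXP_def
    by (intro exI[of _ 1] exI[of _ "\<lambda>_. coeff f 0"] exI[of _ "\<lambda>_ _. 0"]) (simp flip: f)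
qed

lemma EXP_mono: assumes "EXP \<nu> S f d T" "val_ge \<nu> T T'" "d \<le> d'" shows "EXP \<nu> S f d' T'"
proof -
  obtain r :: nat and a l where 1: "\<forall>i<r. fin_exp S (l i)" "f = (\<Sum>i<r. smult (a i) (Qpow (l i)))"
    "\<forall>i<r. val_ge \<nu> (smult (a i) (Qpow (l i))) T" "\<forall>i<r. \<forall>Q. l i Q \<noteq> 0 \<longrightarrow> degree Q \<le> d"
    using assms(1) unfolding EXP_def by (elim exE conjE) (rule that; assumption)
  have "\<forall>i<r. val_ge \<nu> (smult (a i) (Qpow (l i))) T'"
    using 1(3) assms(2) unfolding val_ge_def by auto
  moreover have "\<forall>i<r. \<forall>Q. l i Q \<noteq> 0 \<longrightarrow> degree Q \<le> d'" using 1(4) assms(3) by fastforce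
  ultimately show ?thesis unfolding EXP_def using 1(1,2) by blast
qed

lemma sum_concat: fixes g :: "nat \<Rightarrow> 'b::comm_monoid_add" shows "(\<Sum>i<r1 + r2. g i) = (\<Sum>i<r1. g i) + (\<Sum>i<r2. g (r1 + i))"
  by (induct r2) (simp_all add: add.assoc)

lemma EXP_add: assumes "EXP \<nu> S x d T" "EXP \<nu> S y d T" shows "EXP \<nu> S (x + y) d T"
proof -
  from assms(1) obtain r1 :: nat and a1 l1 where 1: "\<forall>i<r1. fin_exp S (l1 i)" "x = (\<Sum>i<r1. smult (a1 i) (Qpow (l1 i)))"
    "\<forall>i<r1. val_ge \<nu> (smult (a1 i) (Qpow (l1 i))) T" "\<forall>i<r1. \<forall>Q. l1 i Q \<noteq> 0 \<longrightarrow> degree Q \<le> d"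
    using assms(1) unfolding EXP_def by (elim exE conjE) (rule that; assumption)
  from assms(2) obtain r2 :: nat and a2 l2 where 2: "\<forall>i<r2. fin_exp S (l2 i)" "y = (\<Sum>i<r2. smult (a2 i) (Qpow (l2 i)))"
    "\<forall>i<r2. val_ge \<nu> (smult (a2 i) (Qpow (l2 i))) T" "\<forall>i<r2. \<forall>Q. l2 i Q \<noteq> 0 \<longrightarrow> degree Q \<le> d"
    using assms(1) unfolding EXP_def by (elim exE conjE) (rule that; assumption)
  define a where "a i = (if i < r1 then a1 i else a2 (i - r1))" for i
  define l where "l i = (if i < r1 then l1 i else l2 (i - r1))" for i
  have s: "x + y = (\<Sum>i<r1 + r2. smult (a i) (Qpow (l i)))"
    unfolding sum_concat 1(2) 2(2) a_def l_def by simp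
  have c: "\<forall>i<r1 + r2. fin_exp S (l i) \<and> val_ge \<nu> (smult (a i) (Qpow (l i))) T \<and> (\<forall>Q. l i Q \<noteq> 0 \<longrightarrow> degree Q \<le> d)"
  proof (intro allI impI)
    fix i assume i: "i < r1 + r2"
    show "fin_exp S (l i) \<and> val_ge \<nu> (smult (a i) (Qpow (l i))) T \<and> (\<forall>Q. l i Q \<noteq> 0 \<longrightarrow> degree Q \<le> d)"
    proof (cases "i < r1")
      case True then show ?thesis using 1 by (simp add: a_def l_def)
    next
      case False then have "i - r1 < r2" using i by simp
      then show ?thesis using 2 False by (simp add: a_def l_def)
    qed
  qed
  show ?thesis unfolding EXP_def using s c by blast
qed

lemma Qpow_superset:
  assumes "finite F" "{Q. lam Q \<noteq> 0} \<subseteq> F"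
  shows "Qpow lam = (\<Prod>Q\<in>F. Q ^ lam Q)"
  unfolding Qpow_def using assms by (intro prod.mono_neutral_left) auto

lemma Qpow_addR:
  assumes "fin_exp S lam"
  shows "Qpow (\<lambda>Q. lam Q + (if Q = R then 1 else 0)) = Qpow lam * R"
proof -
  define F where "F = insert R {Q. lam Q \<noteq> 0}"
  have fin: "finite F" using assms by (simp add: F_def fin_exp_def)
  have "Qpow (\<lambda>Q. lam Q + (if Q = R then 1 else 0)) = (\<Prod>Q\<in>F. Q ^ (lam Q + (if Q = R then 1 else 0)))"
    by (rule Qpow_superset[OF fin]) (auto simp: F_def)
  also have "\<dots> = (\<Prod>Q\<in>F. Q ^ lam Q) * (\<Prod>Q\<in>F. (if Q = R then Q else 1))"
    by (subst prod.distrib[symmetric], rule prod.cong) auto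
  also have "(\<Prod>Q\<in>F. Q ^ lam Q) = Qpow lam"
    by (rule Qpow_superset[OF fin, symmetric]) (auto simp: F_def)
  also have "(\<Prod>Q\<in>F. (if Q = R then Q else 1)) = R"
    using fin by (simp add: prod.delta F_def)
  finally show ?thesis .
qed

lemma EXP_multR:
  assumes val: "is_valuation \<nu>" and e: "EXP \<nu> S q d q" and RS: "R \<in> S" and R0: "R \<noteq> 0" and dR: "degree R \<le> d"
  shows "EXP \<nu> S (q * R) d (q * R)"
proof -
  from e obtain r :: nat and a l where 1: "\<forall>i<r. fin_exp S (l i)" "q = (\<Sum>i<r. smult (a i) (Qpow (l i)))"
    "\<forall>i<r. val_ge \<nu> (smult (a i) (Qpow (l i))) q" "\<forall>i<r. \<forall>Q. l i Q \<noteq> 0 \<longrightarrow> degree Q \<le> d"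
    using assms(1) unfolding EXP_def by (elim exE conjE) (rule that; assumption)
  define l' where "l' i = (\<lambda>Q. l i Q + (if Q = R then 1 else 0))" for i
  have qp: "Qpow (l' i) = Qpow (l i) * R" if "i < r" for i
    unfolding l'_def using Qpow_addR 1(1) that by blast
  have s: "q * R = (\<Sum>i<r. smult (a i) (Qpow (l' i)))"
    unfolding 1(2) sum_distrib_right by (rule sum.cong) (simp_all add: qp)
  have c: "\<forall>i<r. fin_exp S (l' i) \<and> val_ge \<nu> (smult (a i) (Qpow (l' i))) (q * R) \<and> (\<forall>Q. l' i Q \<noteq> 0 \<longrightarrow> degree Q \<le> d)"
  proof (rule allI, rule impI, intro conjI)
    fix i assume i: "i < r"
    have "{Q. l' i Q \<noteq> 0} = insert R {Q. l i Q \<noteq> 0}" by (auto simp: l'_def)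
    then show "fin_exp S (l' i)" using 1(1) i RS by (simp add: fin_exp_def)
    show "val_ge \<nu> (smult (a i) (Qpow (l' i))) (q * R)"
      using val_ge_mult[OF val R0 1(3)[rule_format, OF i]] qp[OF i] by simp
    show "\<forall>Q. l' i Q \<noteq> 0 \<longrightarrow> degree Q \<le> d"
      using 1(4) i dR by (auto simp: l'_def split: if_splits)
  qed
  show ?thesis unfolding EXP_def using s c by blast
qed

context
  fixes \<nu> :: "'a::field poly \<Rightarrow> 'g::linordered_ab_group_add"
  assumes val: "is_valuation \<nu>"
begin

lemma exists_key_above:
  assumes f1: "degree f \<ge> 1"
  shows "\<exists>Q0. key_poly \<nu> Q0 \<and> degree Q0 \<le> degree f \<and> eps_le \<nu> f Q0"
proof -
  define P where "P n = (\<exists>g. degree g = n \<and> 1 \<le> n \<and> eps_le \<nu> f g)" for n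
  have Pf: "P (degree f)" using f1 eps_le_refl unfolding P_def by blast
  define n0 where "n0 = (LEAST n. P n)"
  have "P n0" unfolding n0_def using Pf by (rule LeastI)
  then obtain g where g: "degree g = n0" "1 \<le> n0" "eps_le \<nu> f g" unfolding P_def by blast
  have n0f: "n0 \<le> degree f" unfolding n0_def using Pf by (rule Least_le)
  have g0: "g \<noteq> 0" using g by auto
  define Q0 where "Q0 = smult (inverse (lead_coeff g)) g"
  have lcne: "inverse (lead_coeff g) \<noteq> 0" using g0 by simp
  have dQ: "degree Q0 = n0" using g lcne by (simp add: Q0_def)
  have lc: "lead_coeff Q0 = 1" using g0 by (simp add: Q0_def)
  have cands: "eps_cands \<nu> Q0 = eps_cands \<nu> g" unfolding Q0_def by (rule eps_cands_smult[OF val lcne])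
  have fQ: "eps_le \<nu> f Q0" using g(3) unfolding eps_le_def cands .
  have key: "key_poly \<nu> Q0"
    unfolding key_poly_def
  proof (intro conjI allI impI)
    show "lead_coeff Q0 = 1" by (rule lc)
    show "1 \<le> degree Q0" using dQ g by simp
    fix h :: "'a poly" assume h: "1 \<le> degree h" "eps_le \<nu> Q0 h"
    then have "eps_le \<nu> f h" using fQ eps_le_trans by blast
    then have "P (degree h)" using h unfolding P_def by blast
    then have "n0 \<le> degree h" unfolding n0_def by (rule Least_le)
    then show "degree Q0 \<le> degree h" using dQ by simp
  qed
  show ?thesis using key dQ n0f fQ by auto
qed

lemma GS1_main:
  assumes Skey: "\<forall>Q\<in>S. key_poly \<nu> Q"
    and cof: "\<forall>Q0. key_poly \<nu> Q0 \<longrightarrow> (\<exists>R\<in>S. degree R = degree Q0 \<and> eps_le \<nu> Q0 R)"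
  shows "EXP \<nu> S f (degree f) f"
proof (induct "degree f" arbitrary: f rule: less_induct)
  case less
  show ?case
  proof (cases "degree f = 0")
    case True then show ?thesis by (rule EXP_const)
  next
    case False
    then have f1: "degree f \<ge> 1" by simp
    then have f0: "f \<noteq> 0" by auto
    obtain Q0 where Q0: "key_poly \<nu> Q0" "degree Q0 \<le> degree f" "eps_le \<nu> f Q0"
      using exists_key_above[OF f1] by blast
    obtain R where R: "R \<in> S" "degree R = degree Q0" "eps_le \<nu> Q0 R" using cof Q0(1) by blast
    have keyR: "key_poly \<nu> R" using Skey R(1) by blast
    have R1: "degree R \<ge> 1" using keyR by (simp add: key_poly_def)
    then have R0: "R \<noteq> 0" by auto
    have fR: "eps_le \<nu> f R" using Q0(3) R(3) eps_le_trans by blast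
    have dg: "val_ge \<nu> (f div R * R) f \<and> val_ge \<nu> (f mod R) f"
      by (rule division_good[OF val keyR f0 fR])
    have dRf: "degree R \<le> degree f" using R(2) Q0(2) by simp
    have dq: "degree (f div R) < degree f" using f1 R1 by (intro degree_div_less) auto
    have dr: "degree (f mod R) < degree f" using degree_mod_less[OF R0, of f] dRf f1 by auto
    have eq: "EXP \<nu> S (f div R) (degree (f div R)) (f div R)" using less dq by blast
    have eq': "EXP \<nu> S (f div R) (degree f) (f div R)"
      by (rule EXP_mono[OF eq val_ge_refl[OF val]]) (use dq in simp)
    have e1: "EXP \<nu> S (f div R * R) (degree f) f"
      by (rule EXP_mono[OF EXP_multR[OF val eq' R(1) R0 dRf] _ order.refl]) (use dg in simp)
    have er: "EXP \<nu> S (f mod R) (degree (f mod R)) (f mod R)" using less dr by blast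
    have e2: "EXP \<nu> S (f mod R) (degree f) f"
      by (rule EXP_mono[OF er]) (use dg dr in simp_all)
    show ?thesis using EXP_add[OF e1 e2] by simp
  qed
qed

end

theorem corollary5p4:
  fixes \<nu> :: "'a::field poly \<Rightarrow> 'g::linordered_ab_group_add"
  assumes "is_valuation \<nu>"
  shows "\<exists>Qs. (\<forall>Q\<in>Qs. key_poly \<nu> Q) \<and> GS1_star \<nu> Qs \<and>
           (\<forall>Q\<in>Qs. \<forall>Q'\<in>Qs. Q \<noteq> Q' \<longrightarrow> \<not> (eps_le \<nu> Q Q' \<and> eps_le \<nu> Q' Q)) \<and>
           wf {(Q, Q'). Q \<in> Qs \<and> Q' \<in> Qs \<and> eps_lt \<nu> Q Q'}"
proof -
  note val = assms
  obtain W :: "'a poly rel" where W: "Well_order W" "Field W = UNIV" using well_ordering[where 'a="'a poly"] by (elim exE conjE) (rule that)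
  define Wl where "Wl = W - Id"
  have lo: "linear_order_on (Field W) W" and wfW: "wf (W - Id)" using W(1) unfolding well_order_on_def by blast+
  have wfWl: "wf Wl" using wfW by (simp only: Wl_def)
  have tot: "total_on UNIV W" using lo W(2) unfolding linear_order_on_def by simp
  have totW: "(x, y) \<in> Wl \<or> (y, x) \<in> Wl" if "x \<noteq> y" for x y
  proof -
    have "(x, y) \<in> W \<or> (y, x) \<in> W" using tot that unfolding total_on_def by blast
    then show ?thesis using that unfolding Wl_def by blast
  qed
  define S where "S = {R. key_poly \<nu> R \<and> (\<forall>R'. key_poly \<nu> R' \<and> degree R' = degree R \<and> (R', R) \<in> Wl \<longrightarrow> eps_lt \<nu> R' R)}"
  have Skey: "\<forall>Q\<in>S. key_poly \<nu> Q" by (simp add: S_def)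
  have F2: "\<not> eps_le \<nu> Q g" if "key_poly \<nu> Q" "1 \<le> degree g" "degree g < degree Q" for Q g
  proof
    assume "eps_le \<nu> Q g"
    then have "degree Q \<le> degree g" using that(1,2) unfolding key_poly_def by blast
    with that(3) show False by simp
  qed
  have le_deg: "degree Q \<le> degree Q'" if "key_poly \<nu> Q" "key_poly \<nu> Q'" "eps_le \<nu> Q Q'" for Q Q'
    using F2[OF that(1), of Q'] that by (force simp: key_poly_def)
  have inS: "eps_lt \<nu> R' R" if "R \<in> S" "key_poly \<nu> R'" "degree R' = degree R" "(R', R) \<in> Wl" for R R'
    using that unfolding S_def by blast
  have dist: "\<forall>Q\<in>S. \<forall>Q'\<in>S. Q \<noteq> Q' \<longrightarrow> \<not> (eps_le \<nu> Q Q' \<and> eps_le \<nu> Q' Q)"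
  proof (intro ballI impI notI)
    fix Q Q' assume QS: "Q \<in> S" "Q' \<in> S" "Q \<noteq> Q'" and e: "eps_le \<nu> Q Q' \<and> eps_le \<nu> Q' Q"
    have k: "key_poly \<nu> Q" "key_poly \<nu> Q'" using QS Skey by auto
    have dd: "degree Q = degree Q'" using le_deg[OF k] le_deg[OF k(2,1)] e by (simp add: antisym)
    from totW[OF QS(3)] show False
    proof
      assume "(Q, Q') \<in> Wl"
      then have "eps_lt \<nu> Q Q'" using inS[OF QS(2) k(1) dd] by blast
      with e show False by (simp add: eps_lt_def)
    next
      assume "(Q', Q) \<in> Wl"
      then have "eps_lt \<nu> Q' Q" using inS[OF QS(1) k(2) dd[symmetric]] by blast
      with e show False by (simp add: eps_lt_def)
    qed
  qed
  have wfS: "wf {(Q, Q'). Q \<in> S \<and> Q' \<in> S \<and> eps_lt \<nu> Q Q'}"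
  proof (rule wf_subset[OF wf_inv_image[OF wf_lex_prod[OF wf_less_than wfWl], of "\<lambda>Q. (degree Q, Q)"]])
    show "{(Q, Q'). Q \<in> S \<and> Q' \<in> S \<and> eps_lt \<nu> Q Q'} \<subseteq> inv_image (less_than <*lex*> Wl) (\<lambda>Q. (degree Q, Q))"
    proof
      fix x assume "x \<in> {(Q, Q'). Q \<in> S \<and> Q' \<in> S \<and> eps_lt \<nu> Q Q'}"
      then obtain Q Q' where x: "x = (Q, Q')" and QS: "Q \<in> S" "Q' \<in> S" and lt: "eps_lt \<nu> Q Q'" by blast
      have k: "key_poly \<nu> Q" "key_poly \<nu> Q'" using QS Skey by auto
      have le: "degree Q \<le> degree Q'" using le_deg[OF k] lt by (simp add: eps_lt_def)
      have "degree Q < degree Q' \<or> degree Q = degree Q' \<and> (Q, Q') \<in> Wl"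
      proof (cases "degree Q = degree Q'")
        case True
        have "Q \<noteq> Q'" using lt eps_le_refl by (auto simp: eps_lt_def)
        from totW[OF this] have "(Q, Q') \<in> Wl"
        proof
          assume "(Q, Q') \<in> Wl" then show ?thesis .
        next
          assume "(Q', Q) \<in> Wl"
          then have "eps_lt \<nu> Q' Q" using inS[OF QS(1) k(2) True[symmetric]] by blast
          with lt have False by (simp add: eps_lt_def)
          then show ?thesis ..
        qed
        then show ?thesis using True by simp
      qed (use le in simp)
      then show "x \<in> inv_image (less_than <*lex*> Wl) (\<lambda>Q. (degree Q, Q))" using x by auto
    qed
  qed
  have cof: "\<forall>Q0. key_poly \<nu> Q0 \<longrightarrow> (\<exists>R\<in>S. degree R = degree Q0 \<and> eps_le \<nu> Q0 R)"
  proof (intro allI impI)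
    fix Q0 assume k0: "key_poly \<nu> Q0"
    define T where "T = {R. key_poly \<nu> R \<and> degree R = degree Q0 \<and> eps_le \<nu> Q0 R}"
    have "Q0 \<in> T" using k0 eps_le_refl by (simp add: T_def)
    then obtain R where R: "R \<in> T" "\<And>y. (y, R) \<in> Wl \<Longrightarrow> y \<notin> T" using wfE_min[OF wfWl] by metis
    have RT: "key_poly \<nu> R" "degree R = degree Q0" "eps_le \<nu> Q0 R" using R(1) by (auto simp: T_def)
    have "R \<in> S"
      unfolding S_def
    proof (intro CollectI conjI allI impI)
      show "key_poly \<nu> R" by (rule RT(1))
      fix R' assume a: "key_poly \<nu> R' \<and> degree R' = degree R \<and> (R', R) \<in> Wl"
      then have "R' \<notin> T" using R(2) by blast
      then have n: "\<not> eps_le \<nu> Q0 R'" using a RT by (simp add: T_def)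
      then have "eps_le \<nu> R' Q0" using eps_le_total by blast
      then have "eps_le \<nu> R' R" using RT(3) eps_le_trans by blast
      moreover have "\<not> eps_le \<nu> R R'" using n RT(3) eps_le_trans by blast
      ultimately show "eps_lt \<nu> R' R" by (simp add: eps_lt_def)
    qed
    then show "\<exists>R\<in>S. degree R = degree Q0 \<and> eps_le \<nu> Q0 R" using RT by blast
  qed
  have "GS1_star \<nu> S" unfolding GS1_EXP using GS1_main[OF val Skey cof] by blast
  then show ?thesis using Skey dist wfS by blast
qed

end
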